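(* Let $n\ge 3$ and $1\le k\le n-2$. Then $n-k-1$ is an eigenvalue of the adjacency matrix of $X[k]$ with multiplicity at least $\binom{n-2}{k}$.
   Context: $T_n=\{(1\,2),\dots,(1\,n)\}$. $X[k]$ is the Schreier coset graph $X(S_n,S'_{n-k},T_n)$, where $S'_{n-k}\le S_n$ is the subgroup fixing $n-k+1,\dots,n$ pointwise; equivalently, $X[k]$ is the multigraph whose vertices are the $k$-tuples of pairwise distinct elements of $[n]$, with, for each vertex $(i_1,\dots,i_k)$ and each $t\in T_n$, an edge joining it to $(t(i_1),\dots,t(i_k))$ (a loop if equal). Its adjacency matrix $A$ has $A_{x,y}=\#\{t\in T_n : t(x)=y\}$, where $t$ acts entrywise on tuples; in particular each loop contributes $1$ to the diagonal entry. *)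

theory Defs
  imports "Jordan_Normal_Form.Jordan_Normal_Form" "HOL-Combinatorics.Transposition"
begin

text \<open>Vertices of X[k]: k-tuples (lists of length k) of pairwise distinct elements
  of [n] = {1..n}, enumerated in a fixed order (any order gives a permutation-similar
  matrix, hence the same spectrum).\<close>
definition Xk_vertices :: "nat \<Rightarrow> nat \<Rightarrow> nat list list" where
  "Xk_vertices n k = filter distinct (List.n_lists k [1..<n+1])"

definition Xk_adj_entry :: "nat \<Rightarrow> nat list \<Rightarrow> nat list \<Rightarrow> nat" where
  "Xk_adj_entry n x y = card {i \<in> {2..n}. map (transpose 1 i) x = y}"

definition Xk_adj :: "nat \<Rightarrow> nat \<Rightarrow> real mat" where
  "Xk_adj n k = (let vs = Xk_vertices n k in
     mat (length vs) (length vs) (\<lambda>(i, j). real (Xk_adj_entry n (vs ! i) (vs ! j))))"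

end

theory Submission
  imports Defs "Jordan_Normal_Form.Jordan_Normal_Form_Uniqueness"
    "Jordan_Normal_Form.Jordan_Normal_Form_Existence" "HOL-Combinatorics.Permutations"
begin

hide_const (open) Coset.order


lemma sum_min1_le: fixes n_as :: "(nat \<times> 'a) list" shows "(\<Sum> n \<leftarrow> map fst [(n, e)\<leftarrow>n_as . e = ev]. min 1 n) \<le> sum_list (map fst (filter (\<lambda> na. snd na = ev) n_as))"
  by (induct n_as) auto

lemma geo_le_alg_complex:
  fixes A :: "complex mat"
  assumes A: "A \<in> carrier_mat N N" and X: "finite X" "X \<subseteq> mat_kernel (char_matrix A ev)"
  and li: "\<not> kernel.lin_dep N (char_matrix A ev) X"
  shows "card X \<le> Polynomial.order ev (char_poly A)"
proof -
  from char_poly_factorized[OF A] obtain as where "char_poly A = (\<Prod>a\<leftarrow>as. [:- a, 1:])" by auto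
  from jordan_nf_exists[OF A this] obtain n_as where jnf: "jordan_nf A n_as" ..
  have CA: "char_matrix A ev \<in> carrier_mat N N" using A by simp
  interpret K: kernel N N "char_matrix A ev" by (unfold_locales, rule CA)
  from kernel_basis_exists[OF CA] obtain B where B: "finite B" "K.basis B" by auto
  have fd: "K.Ker.fin_dim" unfolding K.Ker.fin_dim_def using B unfolding K.Ker.basis_def by auto
  have "card X \<le> K.dim" using K.Ker.li_le_dim(2)[OF fd X(2) li] .
  also have "K.dim = kernel_dim (char_matrix A ev)" by simp
  also have "\<dots> = dim_gen_eigenspace A ev 1" unfolding dim_gen_eigenspace_def using CA by simp
  also have "\<dots> \<le> Polynomial.order ev (char_poly A)" unfolding dim_gen_eigenspace[OF jnf] jordan_nf_order[OF jnf]
    by (rule sum_min1_le)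
  finally show ?thesis .
qed

lemma order_of_real_poly: "Polynomial.order (complex_of_real x) (map_poly complex_of_real p) = Polynomial.order x p"
proof -
  interpret P: map_poly_inj_idom_divide_hom "complex_of_real" ..
  show ?thesis by (rule P.order_hom)
qed

lemma geo_le_alg_real:
  fixes A :: "real mat" and lam :: real and v :: "'i \<Rightarrow> real vec" and idx :: "'i \<Rightarrow> nat"
  assumes A: "A \<in> carrier_mat N N" and I: "finite I"
  and vc: "\<And>i. i \<in> I \<Longrightarrow> v i \<in> carrier_vec N"
  and ve: "\<And>i. i \<in> I \<Longrightarrow> A *\<^sub>v v i = lam \<cdot>\<^sub>v v i"
  and idx: "\<And>i. i \<in> I \<Longrightarrow> idx i < N"
  and delta: "\<And>i j. i \<in> I \<Longrightarrow> j \<in> I \<Longrightarrow> v j $ idx i = (if i = j then 1 else 0)"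
  shows "card I \<le> Polynomial.order lam (char_poly A)"
proof -
  let ?Ac = "map_mat complex_of_real A"
  let ?w = "\<lambda>i. map_vec complex_of_real (v i)"
  let ?ev = "complex_of_real lam"
  define X where "X = ?w ` I"
  have Ac: "?Ac \<in> carrier_mat N N" using A by simp
  have CA: "char_matrix ?Ac ?ev \<in> carrier_mat N N" using Ac by simp
  interpret K: kernel N N "char_matrix ?Ac ?ev" by (unfold_locales, rule CA)
  have wdelta: "?w j $ idx i = (if i = j then 1 else 0)" if "i \<in> I" "j \<in> I" for i j
    using delta[OF that] idx[OF that(1)] vc[OF that(2)] by auto
  have inj: "inj_on ?w I"
  proof
    fix i j assume ij: "i \<in> I" "j \<in> I" "?w i = ?w j"
    from arg_cong[OF ij(3), of "\<lambda>x. x $ idx i"] wdelta[OF ij(1) ij(1)] wdelta[OF ij(1) ij(2)]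
    show "i = j" by (auto split: if_splits)
  qed
  have cardX: "card X = card I" unfolding X_def using card_image[OF inj] .
  have Xk: "X \<subseteq> mat_kernel (char_matrix ?Ac ?ev)"
  proof
    fix x assume "x \<in> X"
    then obtain i where i: "i \<in> I" and x: "x = ?w i" unfolding X_def by auto
    have xc: "x \<in> carrier_vec N" using vc[OF i] x by simp
    have "?Ac *\<^sub>v x = ?ev \<cdot>\<^sub>v x"
      unfolding x of_real_hom.mult_mat_vec_hom[OF A vc[OF i], symmetric] ve[OF i]
      by (rule eq_vecI, auto)
    moreover have "(- ?ev \<cdot>\<^sub>m 1\<^sub>m N) *\<^sub>v x = (- ?ev) \<cdot>\<^sub>v (1\<^sub>m N *\<^sub>v x)" using xc by auto
    ultimately have "char_matrix ?Ac ?ev *\<^sub>v x = 0\<^sub>v N" unfolding char_matrix_def using xc Ac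
      by (simp add: add_mult_distrib_mat_vec[OF Ac _ xc], intro eq_vecI, auto)
    thus "x \<in> mat_kernel (char_matrix ?Ac ?ev)" using xc CA by (intro mat_kernelI)
  qed
  have li: "\<not> K.lin_dep X"
  proof
    assume "K.lin_dep X"
    then obtain u a U where finU: "finite U" and US: "U \<subseteq> X"
      and lc: "K.lincomb a U = 0\<^sub>v N" and vU: "u \<in> U" and au: "a u \<noteq> 0"
      unfolding K.Ker.lin_dep_def by (auto simp: module_vec_simps class_ring_simps)
    from vU US obtain i where i: "i \<in> I" and u: "u = ?w i" unfolding X_def by auto
    have UK: "U \<subseteq> mat_kernel (char_matrix ?Ac ?ev)" using US Xk by auto
    from arg_cong[OF lc, of "\<lambda>x. x $ idx i"] K.lincomb_index[OF idx[OF i] UK]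
    have "0 = (\<Sum>x\<in>U. a x * x $ idx i)" using idx[OF i] by simp
    also have "\<dots> = a u * u $ idx i + (\<Sum>x\<in>U - {u}. a x * x $ idx i)"
      using sum.remove[OF finU vU] by simp
    also have "(\<Sum>x\<in>U - {u}. a x * x $ idx i) = 0"
    proof (rule sum.neutral, intro ballI)
      fix x assume "x \<in> U - {u}"
      then obtain j where j: "j \<in> I" "x = ?w j" "x \<noteq> u" using US unfolding X_def by auto
      hence "i \<noteq> j" using u by auto
      thus "a x * x $ idx i = 0" using wdelta[OF i j(1)] j by simp
    qed
    also have "u $ idx i = 1" using wdelta[OF i i] u by simp
    finally show False using au by simp
  qed
  have "card X \<le> Polynomial.order ?ev (char_poly ?Ac)"
    by (rule geo_le_alg_complex[OF Ac _ Xk li], unfold X_def, rule finite_imageI[OF I])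
  also have "char_poly ?Ac = map_poly complex_of_real (char_poly A)"
    by (rule of_real_hom.char_poly_hom[OF A])
  also have "Polynomial.order ?ev (map_poly complex_of_real (char_poly A)) = Polynomial.order lam (char_poly A)"
    by (rule order_of_real_poly)
  finally show ?thesis using cardX by simp
qed



definition permof :: "nat list \<Rightarrow> nat list \<Rightarrow> nat \<Rightarrow> nat" where
  "permof r y z = (case map_of (zip r y) z of None \<Rightarrow> z | Some w \<Rightarrow> w)"

lemma permof_nth: "length r = length y \<Longrightarrow> distinct r \<Longrightarrow> i < length r \<Longrightarrow> permof r y (r ! i) = y ! i"
  unfolding permof_def by (simp add: map_of_zip_nth)

lemma permof_out: "length r = length y \<Longrightarrow> z \<notin> set r \<Longrightarrow> permof r y z = z"
proof -
  assume "length r = length y" "z \<notin> set r"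
  hence "map_of (zip r y) z = None" by simp
  thus ?thesis unfolding permof_def by simp
qed

lemma permof_permutes:
  assumes l: "length r = length y" and dr: "distinct r" and dy: "distinct y" and s: "set y = set r"
  shows "permof r y permutes set r"
proof (rule bij_imp_permutes)
  have img: "permof r y ` set r = set r"
  proof -
    have "permof r y ` set r = {y ! i |i. i < length r}"
    proof (intro equalityI subsetI)
      fix a assume "a \<in> permof r y ` set r"
      then obtain i where "i < length r" "a = permof r y (r ! i)" by (auto simp: in_set_conv_nth)
      thus "a \<in> {y ! i |i. i < length r}" using permof_nth[OF l dr] by auto
    next
      fix a assume "a \<in> {y ! i |i. i < length r}"
      then obtain i where i: "i < length r" "a = y ! i" by auto
      hence "a = permof r y (r ! i)" using permof_nth[OF l dr] by simp
      thus "a \<in> permof r y ` set r" using i by auto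
    qed
    also have "\<dots> = set y" using l by (auto simp: in_set_conv_nth)
    finally show ?thesis using s by simp
  qed
  hence "inj_on (permof r y) (set r)" by (intro eq_card_imp_inj_on) auto
  with img show "bij_betw (permof r y) (set r) (set r)" unfolding bij_betw_def by auto
qed (rule permof_out[OF l])

lemma permof_self: assumes "distinct r" shows "permof r r = id"
proof
  fix z show "permof r r z = id z"
  proof (cases "z \<in> set r")
    case True then obtain i where "i < length r" "z = r ! i" by (auto simp: in_set_conv_nth)
    thus ?thesis using permof_nth[OF refl assms] by simp
  qed (simp add: permof_out)
qed

lemma permof_swap:
  assumes l: "length r = length y" and dr: "distinct r" and u: "u \<in> set r" and w: "w \<in> set r"
  shows "permof r (map (transpose u w) y) = transpose u w \<circ> permof r y"
proof
  fix z show "permof r (map (transpose u w) y) z = (transpose u w \<circ> permof r y) z"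
  proof (cases "z \<in> set r")
    case True then obtain i where i: "i < length r" "z = r ! i" by (auto simp: in_set_conv_nth)
    thus ?thesis using permof_nth[OF _ dr] l by simp
  next
    case False
    hence "z \<noteq> u" "z \<noteq> w" using u w by auto
    thus ?thesis using False l by (simp add: permof_out transpose_def)
  qed
qed

lemma sign_permof_swap:
  assumes l: "length r = length y" and dr: "distinct r" and dy: "distinct y" and s: "set y = set r"
    and u: "u \<in> set r" and w: "w \<in> set r" and uw: "u \<noteq> w"
  shows "sign (permof r (map (transpose u w) y)) = - sign (permof r y)"
proof -
  have "permutation (permof r y)"
    using permof_permutes[OF l dr dy s] by (rule permutes_imp_permutation[rotated]) simp
  thus ?thesis unfolding permof_swap[OF l dr u w]
    by (simp add: sign_compose permutation_swap_id sign_swap_id uw)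
qed



definition fS :: "nat set \<Rightarrow> nat list \<Rightarrow> real" where
  "fS S x = (if 1 \<notin> set x \<and> set x \<subseteq> insert 2 S
     then real_of_int (sign (permof (2 # sorted_list_of_set S) (Min (insert 2 S - set x) # x))) else 0)"

lemma fS_one: "1 \<in> set x \<Longrightarrow> fS S x = 0" unfolding fS_def by simp

lemma fS_lead:
  assumes S: "S \<subseteq> {3..n}" "card S = k" and T: "T \<subseteq> {3..n}" "card T = k"
  shows "fS T (sorted_list_of_set S) = (if S = T then 1 else 0)"
proof -
  have fS': "finite S" "finite T" using S T finite_subset by auto
  have st: "set (sorted_list_of_set S) = S" using fS' by simp
  have n1: "1 \<notin> S" "2 \<notin> S" using S by auto
  show ?thesis
  proof (cases "S = T")
    case True
    have "insert 2 S - S = {2}" using n1 by auto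
    moreover have "distinct (2 # sorted_list_of_set S)" using n1 fS' by simp
    ultimately show ?thesis unfolding fS_def st using True n1 by (simp add: permof_self subset_insertI)
  next
    case False
    have "\<not> S \<subseteq> insert 2 T"
    proof
      assume "S \<subseteq> insert 2 T"
      hence "S \<subseteq> T" using n1 by auto
      hence "S = T" using card_subset_eq[OF fS'(2)] S T by auto
      with False show False ..
    qed
    thus ?thesis unfolding fS_def st using False by simp
  qed
qed

lemma eig_row:
  assumes S: "S \<subseteq> {3..n}" "card S = k" and kn: "k \<le> n - 2" and n3: "n \<ge> 3"
  and x: "length x = k" "distinct x" "set x \<subseteq> {1..n}"
  shows "(\<Sum> i\<in>{2..n}. fS S (map (transpose 1 i) x)) = (real n - real k - 1) * fS S x"
proof (cases "1 \<in> set x")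
  case False
  have eq: "fS S (map (transpose 1 i) x) = (if i \<in> set x then 0 else fS S x)" if i: "i \<in> {2..n}" for i
  proof (cases "i \<in> set x")
    case True
    hence "1 \<in> set (map (transpose 1 i) x)" by force
    thus ?thesis using True fS_one by simp
  next
    case F: False
    have "map (transpose 1 i) x = x" using F False by (intro map_idI) (auto simp: transpose_def)
    thus ?thesis using F by simp
  qed
  have "(\<Sum> i\<in>{2..n}. fS S (map (transpose 1 i) x)) = (\<Sum> i\<in>{2..n}. (if i \<in> set x then 0 else fS S x))"
    using eq by (rule sum.cong[OF refl])
  also have "\<dots> = real (card ({2..n} - set x)) * fS S x"
    by (simp add: sum.If_cases Diff_eq)
  also have "card ({2..n} - set x) = n - 1 - k"
  proof -
    have "set x \<subseteq> {2..n}"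
    proof
      fix t assume t: "t \<in> set x"
      hence "t \<in> {1..n}" "t \<noteq> 1" using x(3) False by auto
      thus "t \<in> {2..n}" by auto
    qed
    hence "card ({2..n} - set x) = card {2..n} - card (set x)" by (simp add: card_Diff_subset)
    thus ?thesis using distinct_card[OF x(2)] x(1) by simp
  qed
  also have "real (n - 1 - k) = real n - real k - 1" proof -
    have "Suc k \<le> n" using kn n3 by arith
    thus ?thesis by (simp add: of_nat_diff)
  qed
  finally show ?thesis .
next
  case True
  then obtain p where p: "p < k" "x ! p = 1" using x(1) by (auto simp: in_set_conv_nth)
  define C where "C = insert 2 S"
  define D where "D = set x - {1}"
  define ref where "ref = 2 # sorted_list_of_set S"
  have fS': "finite S" using S finite_subset by auto
  have n12: "1 \<notin> C" "2 \<notin> S" "1 \<notin> S" using S unfolding C_def by auto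
  have setref: "set ref = C" unfolding ref_def C_def using fS' by simp
  have dref: "distinct ref" unfolding ref_def using fS' n12 by simp
  have lref: "length ref = k + 1" unfolding ref_def using fS' S by simp
  have cardC: "card C = k + 1" unfolding C_def using fS' n12 S by simp
  have cardD: "card D = k - 1" unfolding D_def using True distinct_card[OF x(2)] x(1) by simp
  have Cn: "C \<subseteq> {2..n}" unfolding C_def using S kn n3 by auto
  have upd: "set (x[p := i]) = insert i D" for i
    unfolding D_def using set_update_distinct[OF x(2), of p i] p x(1) by simp
  have eq: "fS S (map (transpose 1 i) x) = (if i \<in> set x then 0 else fS S (x[p := i]))" if i: "i \<in> {2..n}" for i
  proof (cases "i \<in> set x")
    case True
    hence "1 \<in> set (map (transpose 1 i) x)" by force
    thus ?thesis using True fS_one by simp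
  next
    case F: False
    have "map (transpose 1 i) x = x[p := i]"
    proof (rule nth_equalityI)
      fix j assume "j < length (map (transpose 1 i) x)"
      hence j: "j < k" using x by simp
      show "map (transpose 1 i) x ! j = x[p := i] ! j"
      proof (cases "j = p")
        case True thus ?thesis using p x j by simp
      next
        case False
        have "x ! j \<noteq> 1" using p False nth_eq_iff_index_eq[OF x(2)] j x(1) by metis
        moreover have "x ! j \<noteq> i" using F j x(1) by auto
        ultimately show ?thesis using False j x(1) by (simp add: transpose_def)
      qed
    qed simp
    thus ?thesis using F by simp
  qed
  have "(\<Sum> i\<in>{2..n}. fS S (map (transpose 1 i) x)) = (\<Sum> i\<in>{2..n}. (if i \<in> set x then 0 else fS S (x[p := i])))"
    using eq by (rule sum.cong[OF refl])
  also have "\<dots> = (\<Sum> i\<in>{2..n} - set x. fS S (x[p := i]))"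
    by (simp add: sum.If_cases Diff_eq)
  also have "\<dots> = 0"
  proof (cases "D \<subseteq> C")
    case False
    show ?thesis
    proof (rule sum.neutral, intro ballI)
      fix i show "fS S (x[p := i]) = 0" using False unfolding fS_def upd C_def by auto
    qed
  next
    case True
    have CD: "C - set x = C - D" unfolding D_def using n12 by auto
    have finD: "finite D" unfolding D_def by simp
    have "card (C - set x) = 2" unfolding CD using card_Diff_subset[OF finD True] cardC cardD p by auto
    then obtain u w where uw: "C - set x = {u, w}" "u \<noteq> w" by (auto simp: card_2_iff)
    have uC: "u \<in> C" "u \<notin> set x" "w \<in> C" "w \<notin> set x" using uw by auto
    have u1: "u \<noteq> 1" "w \<noteq> 1" using uC n12 by auto
    have "(\<Sum> i\<in>{2..n} - set x. fS S (x[p := i])) = (\<Sum> i\<in>C - set x. fS S (x[p := i]))"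
    proof (rule sum.mono_neutral_right)
      show "C - set x \<subseteq> {2..n} - set x" using Cn by auto
      show "\<forall>i\<in>{2..n} - set x - (C - set x). fS S (x[p := i]) = 0"
        unfolding fS_def upd C_def by auto
    qed simp
    also have "\<dots> = fS S (x[p := u]) + fS S (x[p := w])" using uw by simp
    also have "\<dots> = 0"
    proof -
      have sub: "insert u D \<subseteq> C" "insert w D \<subseteq> C" using True uC by auto
      have m1: "C - insert u D = {w}" using uw CD by auto
      have m2: "C - insert w D = {u}" using uw CD by auto
      have one: "1 \<notin> insert u D" "1 \<notin> insert w D" unfolding D_def using u1 by auto
      have f1: "fS S (x[p := u]) = real_of_int (sign (permof ref (w # x[p := u])))"
        unfolding fS_def upd using sub one m1 unfolding C_def ref_def by simp
      have f2: "fS S (x[p := w]) = real_of_int (sign (permof ref (u # x[p := w])))"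
        unfolding fS_def upd using sub one m2 unfolding C_def ref_def by simp
      have swap: "u # x[p := w] = map (transpose u w) (w # x[p := u])"
      proof (rule nth_equalityI)
        fix j assume "j < length (u # x[p := w])"
        hence j: "j < k + 1" using x(1) by simp
        show "(u # x[p := w]) ! j = map (transpose u w) (w # x[p := u]) ! j"
        proof (cases j)
          case 0 thus ?thesis by simp
        next
          case (Suc j')
          hence j': "j' < k" using j by simp
          show ?thesis
          proof (cases "j' = p")
            case True thus ?thesis using Suc j' x(1) by simp
          next
            case False
            have "x ! j' \<noteq> u" "x ! j' \<noteq> w" using uC j' x(1) by (auto simp: in_set_conv_nth)
            thus ?thesis using Suc False j' x(1) by (simp add: transpose_def)
          qed
        qed
      qed simp
      have dy: "distinct (w # x[p := u])"
      proof -
        have "distinct (x[p := u])"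
          using x(2) p x(1) uC by (auto simp: distinct_list_update set_update_distinct)
        moreover have "w \<notin> set (x[p := u])" unfolding upd D_def using uC uw by auto
        ultimately show ?thesis by simp
      qed
      have sy: "set (w # x[p := u]) = set ref" unfolding setref using upd m1 sub by auto
      have ly: "length ref = length (w # x[p := u])" using lref x(1) by simp
      have "sign (permof ref (map (transpose u w) (w # x[p := u]))) = - sign (permof ref (w # x[p := u]))"
        by (rule sign_permof_swap[OF ly dref dy sy]) (use uC uw setref in auto)
      thus ?thesis unfolding f1 f2 swap by simp
    qed
    finally show ?thesis .
  qed
  also have "\<dots> = (real n - real k - 1) * fS S x" using fS_one[OF True] by simp
  finally show ?thesis .
qed



lemma vs_set: "set (Xk_vertices n k) = {x. length x = k \<and> distinct x \<and> set x \<subseteq> {1..n}}"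
  unfolding Xk_vertices_def by (auto simp: set_n_lists)

lemma vs_distinct: "distinct (Xk_vertices n k)"
  unfolding Xk_vertices_def by (simp add: distinct_n_lists)

lemma map_transpose_vs:
  assumes "x \<in> set (Xk_vertices n k)" "i \<in> {2..n}"
  shows "map (transpose 1 i) x \<in> set (Xk_vertices n k)"
proof -
  have "inj_on (transpose 1 i) (set x)" by simp
  moreover have "transpose 1 i a \<in> {1..n}" if "a \<in> {1..n}" for a
    using that assms(2) by (auto simp: transpose_def)
  ultimately show ?thesis using assms(1) unfolding vs_set by (auto simp: distinct_map)
qed

lemma sum_delta_list:
  assumes d: "distinct vs" and y: "y \<in> set vs"
  shows "(\<Sum> j<length vs. if y = vs ! j then g (vs ! j) else 0) = (g y :: real)"
proof -
  from y obtain j0 where j0: "j0 < length vs" "vs ! j0 = y" by (auto simp: in_set_conv_nth)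
  have "(\<Sum> j<length vs. if y = vs ! j then g (vs ! j) else 0) = (\<Sum> j<length vs. if j = j0 then g y else 0)"
    by (rule sum.cong[OF refl]) (use j0 nth_eq_iff_index_eq[OF d] in auto)
  also have "\<dots> = g y" using j0 by simp
  finally show ?thesis .
qed

lemma adj_row:
  assumes r: "r < length (Xk_vertices n k)"
  shows "(Xk_adj n k *\<^sub>v vec (length (Xk_vertices n k)) (\<lambda>j. g (Xk_vertices n k ! j))) $ r
    = (\<Sum> i\<in>{2..n}. g (map (transpose 1 i) (Xk_vertices n k ! r)))"
proof -
  define vs where "vs = Xk_vertices n k"
  define x where "x = vs ! r"
  have x: "x \<in> set vs" unfolding x_def using r vs_def by simp
  have "(Xk_adj n k *\<^sub>v vec (length vs) (\<lambda>j. g (vs ! j))) $ r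
     = (\<Sum> j<length vs. real (card {i \<in> {2..n}. map (transpose 1 i) x = vs ! j}) * g (vs ! j))"
    using r unfolding Xk_adj_def Let_def vs_def[symmetric] x_def Xk_adj_entry_def
    by (simp add: scalar_prod_def lessThan_atLeast0)
  also have "\<dots> = (\<Sum> j<length vs. \<Sum> i\<in>{2..n}. if map (transpose 1 i) x = vs ! j then g (vs ! j) else 0)"
  proof (rule sum.cong[OF refl])
    fix j
    have "(\<Sum> i\<in>{2..n}. if map (transpose 1 i) x = vs ! j then g (vs ! j) else 0)
      = real (card ({2..n} \<inter> {i. map (transpose 1 i) x = vs ! j})) * g (vs ! j)"
      by (simp add: sum.If_cases)
    thus "real (card {i \<in> {2..n}. map (transpose 1 i) x = vs ! j}) * g (vs ! j) =
         (\<Sum> i\<in>{2..n}. if map (transpose 1 i) x = vs ! j then g (vs ! j) else 0)"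
      by (simp add: Int_def conj_commute)
  qed
  also have "\<dots> = (\<Sum> i\<in>{2..n}. \<Sum> j<length vs. if map (transpose 1 i) x = vs ! j then g (vs ! j) else 0)"
    by (rule sum.swap)
  also have "\<dots> = (\<Sum> i\<in>{2..n}. g (map (transpose 1 i) x))"
    by (rule sum.cong[OF refl], rule sum_delta_list[OF vs_distinct[of n k, folded vs_def]],
        rule map_transpose_vs[of _ n k, folded vs_def, OF x])
  finally show ?thesis unfolding vs_def x_def .
qed

theorem mainTheorem10:
  fixes n k :: nat
  assumes "n \<ge> 3" and "1 \<le> k" and "k \<le> n - 2"
  shows "eigenvalue (Xk_adj n k) (real n - real k - 1)
    \<and> order (real n - real k - 1) (char_poly (Xk_adj n k)) \<ge> (n - 2) choose k"
proof -
  define vs where "vs = Xk_vertices n k"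
  define N where "N = length vs"
  define A where "A = Xk_adj n k"
  define lam where "lam = real n - real k - 1"
  define I where "I = {S. S \<subseteq> {3..n} \<and> card S = k}"
  define v where "v S = vec N (\<lambda>j. fS S (vs ! j))" for S
  define idx where "idx S = (SOME j. j < N \<and> vs ! j = sorted_list_of_set S)" for S
  have A: "A \<in> carrier_mat N N" unfolding A_def N_def vs_def Xk_adj_def Let_def by simp
  have cardI: "card I = (n - 2) choose k" unfolding I_def by (subst n_subsets) auto
  have finI: "finite I" unfolding I_def by (rule finite_subset[of _ "Pow {3..n}"]) auto
  have idx: "idx S < N \<and> vs ! idx S = sorted_list_of_set S" if "S \<in> I" for S
  proof -
    have fS: "finite S" "S \<subseteq> {3..n}" "card S = k" using that finite_subset unfolding I_def by auto
    have "sorted_list_of_set S \<in> set vs" unfolding vs_def vs_set using fS by auto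
    then obtain j where "j < N" "vs ! j = sorted_list_of_set S" unfolding N_def by (auto simp: in_set_conv_nth)
    hence "\<exists>j. j < N \<and> vs ! j = sorted_list_of_set S" by blast
    thus ?thesis unfolding idx_def by (rule someI_ex)
  qed
  have ve: "A *\<^sub>v v S = lam \<cdot>\<^sub>v v S" if S: "S \<in> I" for S
  proof (rule eq_vecI)
    show "dim_vec (A *\<^sub>v v S) = dim_vec (lam \<cdot>\<^sub>v v S)" using A unfolding v_def by simp
    fix r assume "r < dim_vec (lam \<cdot>\<^sub>v v S)"
    hence r: "r < N" unfolding v_def by simp
    have xr: "vs ! r \<in> set vs" using r N_def by simp
    have "(A *\<^sub>v v S) $ r = (\<Sum> i\<in>{2..n}. fS S (map (transpose 1 i) (vs ! r)))"
      unfolding A_def v_def N_def vs_def by (rule adj_row, use r N_def vs_def in simp)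
    also have "\<dots> = lam * fS S (vs ! r)" unfolding lam_def
      by (rule eig_row) (use S assms xr in \<open>auto simp: I_def vs_def vs_set\<close>)
    also have "\<dots> = (lam \<cdot>\<^sub>v v S) $ r" using r unfolding v_def by simp
    finally show "(A *\<^sub>v v S) $ r = (lam \<cdot>\<^sub>v v S) $ r" .
  qed
  have "card I \<le> order lam (char_poly A)"
  proof (rule geo_le_alg_real[OF A finI])
    show "\<And>i. i \<in> I \<Longrightarrow> v i \<in> carrier_vec N" unfolding v_def by simp
    show "\<And>i. i \<in> I \<Longrightarrow> A *\<^sub>v v i = lam \<cdot>\<^sub>v v i" by (rule ve)
    show "\<And>i. i \<in> I \<Longrightarrow> idx i < N" using idx by blast
    fix S T assume S: "S \<in> I" and T: "T \<in> I"
    show "v T $ idx S = (if S = T then 1 else 0)"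
      using idx[OF S] fS_lead[of S n k T] S T unfolding v_def I_def by simp
  qed
  hence ord: "(n - 2) choose k \<le> order lam (char_poly A)" using cardI by simp
  have pos: "0 < (n - 2) choose k" using assms by simp
  have "order lam (char_poly A) \<noteq> 0" using ord pos by linarith
  moreover have "char_poly A \<noteq> 0" using degree_monic_char_poly[OF A] by auto
  ultimately have "poly (char_poly A) lam = 0" by (simp add: order_root)
  hence "eigenvalue A lam" using eigenvalue_root_char_poly[OF A] by simp
  with ord show ?thesis unfolding A_def lam_def by simp
qed


end
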